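(* Let $0<T<\infty$, $a,b\in\mathbb{R}$, $(B_t)_{t\in[0,T]}$ the continuous version of $B_t=\langle\cdot,\mathbf{1}_{[0,t)}\rangle$ on the white noise space, $X_t:=a(1-\frac tT)+b\frac tT+B_t-\frac tT B_T$, and for $\varepsilon>0$ let $\mathcal{I}^{BB}_\varepsilon:=\int_0^T\int_0^t p_\varepsilon(X_t-X_s)\,ds\,dt$ with $p_\varepsilon(x)=(2\pi\varepsilon)^{-1/2}e^{-x^2/(2\varepsilon)}$; let $\mathcal{I}^{BB}\in L^2(\mu)$ be the $L^2(\mu)$-limit of $\mathcal{I}^{BB}_\varepsilon$ as $\varepsilon\downarrow0$ (which exists). Then for every $z\in\mathbb{C}$ with $\operatorname{Re}z\le 0$ and every $1\le p<\infty$, $\exp(z\mathcal{I}^{BB}_\varepsilon)$ converges to $\exp(z\mathcal{I}^{BB})$ in $L^p(\mu)$ as $\varepsilon\to0$.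
   Context: $\mu$ is the white noise measure on the space $\mathcal{S}'(\mathbb{R})$ of tempered distributions: $\int\exp(i\langle\omega,\xi\rangle)d\mu(\omega)=\exp(-\frac12\langle\xi,\xi\rangle)$ for Schwartz $\xi$, with $\langle\cdot,\cdot\rangle$ the dual pairing extending the $L^2(\mathbb{R})$ inner product; for $\xi\in L^2(\mathbb{R})$, $\langle\cdot,\xi\rangle$ is an $L^2(\mu)$-limit. $(B_t)$ is then a standard Brownian motion and $(X_t)$ a Brownian bridge from $a$ to $b$ on $[0,T]$. $L^p(\mu)$ denotes complex-valued $p$-integrable functions w.r.t. $\mu$. *)

theory Defs
  imports "HOL-Probability.Probability"
begin

definition heat_kernel :: "real \<Rightarrow> real \<Rightarrow> real" where
  "heat_kernel \<epsilon> x = exp (- (x ^ 2) / (2 * \<epsilon>)) / sqrt (2 * pi * \<epsilon>)"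

definition brownian_motion_on :: "'a measure \<Rightarrow> real \<Rightarrow> (real \<Rightarrow> 'a \<Rightarrow> real) \<Rightarrow> bool" where
  "brownian_motion_on M T B \<longleftrightarrow>
     prob_space M \<and>
     (\<forall>t\<in>{0..T}. B t \<in> borel_measurable M) \<and>
     (\<forall>\<omega>\<in>space M. B 0 \<omega> = 0) \<and>
     (\<forall>\<omega>\<in>space M. continuous_on {0..T} (\<lambda>t. B t \<omega>)) \<and>
     (\<forall>s t. 0 \<le> s \<and> s < t \<and> t \<le> T \<longrightarrow>
        distributed M lborel (\<lambda>\<omega>. B t \<omega> - B s \<omega>) (normal_density 0 (sqrt (t - s)))) \<and>
     (\<forall>(n::nat) (ts::nat \<Rightarrow> real). 0 \<le> ts 0 \<and> ts n \<le> T \<and> (\<forall>i<n. ts i < ts (Suc i)) \<longrightarrow>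
        prob_space.indep_vars M (\<lambda>_. borel) (\<lambda>i \<omega>. B (ts (Suc i)) \<omega> - B (ts i) \<omega>) {..<n})"

definition brownian_bridge :: "real \<Rightarrow> real \<Rightarrow> real \<Rightarrow> (real \<Rightarrow> 'a \<Rightarrow> real) \<Rightarrow> real \<Rightarrow> 'a \<Rightarrow> real" where
  "brownian_bridge a b T B t \<omega> = a * (1 - t / T) + b * (t / T) + B t \<omega> - (t / T) * B T \<omega>"

definition self_int_eps :: "real \<Rightarrow> real \<Rightarrow> real \<Rightarrow> (real \<Rightarrow> 'a \<Rightarrow> real) \<Rightarrow> real \<Rightarrow> 'a \<Rightarrow> real" where
  "self_int_eps a b T B \<epsilon> \<omega> =
     (LINT t:{0..T}|lborel. (LINT s:{0..t}|lborel.
        heat_kernel \<epsilon> (brownian_bridge a b T B t \<omega> - brownian_bridge a b T B s \<omega>)))"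

end

theory Submission
  imports Defs
begin


lemma exp_diff_bound:
  fixes z :: complex and x y :: real
  assumes z: "Re z \<le> 0" and x: "0 \<le> x" and y: "0 \<le> y"
  shows "norm (exp (z * complex_of_real x) - exp (z * complex_of_real y)) \<le> norm z * \<bar>x - y\<bar>"
proof -
  let ?S = "complex_of_real ` {0..}"
  have cvx: "convex ?S"
    by (intro convex_linear_image) (auto intro: bounded_linear_of_real)
  have "norm (exp (z * complex_of_real x) - exp (z * complex_of_real y)) \<le> norm z * norm (complex_of_real x - complex_of_real y)"
  proof (rule field_differentiable_bound[OF cvx, where f="\<lambda>w. exp (z*w)" and f'="\<lambda>w. z * exp (z*w)"])
    fix w assume "w \<in> ?S"
    show "((\<lambda>w. exp (z*w)) has_field_derivative z * exp (z*w)) (at w within ?S)"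
      by (auto intro!: derivative_eq_intros)
  next
    fix w assume "w \<in> ?S"
    then obtain r where r: "r \<ge> 0" "w = complex_of_real r" by auto
    have "norm (exp (z*w)) = exp (Re z * r)" using r by (simp add: norm_exp_eq_Re)
    also have "\<dots> \<le> 1" using z r by (simp add: mult_nonpos_nonneg)
    finally show "norm (z * exp (z*w)) \<le> norm z"
      by (simp add: norm_mult mult_left_le)
  qed (use x y in auto)
  then show ?thesis by (simp flip: of_real_diff)
qed

lemma exp_norm_le1:
  fixes z :: complex and x :: real
  assumes z: "Re z \<le> 0" and x: "0 \<le> x"
  shows "norm (exp (z * complex_of_real x)) \<le> 1"
  using z x by (simp add: norm_exp_eq_Re mult_nonpos_nonneg)

lemma key_bound:
  fixes N c d p \<delta> :: real
  assumes "0 \<le> N" "N \<le> 2" "N \<le> c * d" "1 \<le> p" "0 < \<delta>" "0 \<le> c" "0 \<le> d"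
  shows "N powr p \<le> 2 powr (p - 1) * (\<delta> + c^2 / \<delta> * d^2)"
proof -
  have h1: "(N/2) powr p \<le> (N/2) powr 1"
    using assms by (intro powr_mono') auto
  have "N powr p = 2 powr p * (N/2) powr p"
    using assms by (simp add: powr_divide)
  also have "\<dots> \<le> 2 powr p * (N/2)" using h1 assms by simp
  also have "\<dots> = 2 powr (p-1) * N" by (simp add: powr_diff)
  also have "N \<le> \<delta> + c^2/\<delta> * d^2"
  proof (cases "N \<le> \<delta>")
    case True then show ?thesis using assms by (simp add: add_increasing2)
  next
    case False
    have "N * N \<le> (c*d)^2" using assms
      by (metis power2_eq_square mult_mono order.trans)
    then have "N * \<delta> \<le> c^2 * d^2" using False assms
      by (smt (verit) mult_left_mono power_mult_distrib)
    then have "N \<le> c^2/\<delta> * d^2" using assms by (simp add: field_simps)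
    then show ?thesis using assms by simp
  qed
  then have "2 powr (p-1) * N \<le> 2 powr (p-1) * (\<delta> + c^2/\<delta> * d^2)" by simp
  finally show ?thesis by simp
qed


lemma joint_meas:
  fixes M :: "'a measure" and B :: "real \<Rightarrow> 'a \<Rightarrow> real"
  assumes T: "0 < T" and BM: "brownian_motion_on M T B"
  shows "(\<lambda>(\<omega>,t). B (max 0 (min T t)) \<omega>) \<in> borel_measurable (M \<Otimes>\<^sub>M lborel)"
proof -
  define c where "c t = max 0 (min T t)" for t :: real
  have Bm: "\<And>t. t \<in> {0..T} \<Longrightarrow> B t \<in> borel_measurable M"
    and Bc: "\<And>\<omega>. \<omega> \<in> space M \<Longrightarrow> continuous_on {0..T} (\<lambda>t. B t \<omega>)"
    using BM unfolding brownian_motion_on_def by auto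
  define q where "q n t = T * real (nat \<lfloor>real (Suc n) * c t / T\<rfloor>) / real (Suc n)" for n t
  define f where "f n = (\<lambda>(\<omega>,t). \<Sum>k\<le>Suc n. if nat \<lfloor>real (Suc n) * c t / T\<rfloor> = k then B (T * real k / real (Suc n)) \<omega> else 0)" for n
  have cT: "0 \<le> c t" "c t \<le> T" for t using T by (auto simp: c_def)
  have fl: "nat \<lfloor>real (Suc n) * c t / T\<rfloor> \<le> Suc n" for n t
  proof -
    have "real (Suc n) * c t / T \<le> real (Suc n)" using cT[of t] T
      by (simp add: divide_le_eq mult_left_le)
    then have "\<lfloor>real (Suc n) * c t / T\<rfloor> \<le> int (Suc n)"
      by (metis floor_mono floor_of_nat of_int_of_nat_eq)
    then show ?thesis by linarith
  qed
  have feq: "f n (\<omega>,t) = B (q n t) \<omega>" for n \<omega> t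
  proof -
    have se: "{x. x = nat \<lfloor>real (Suc n) * c t / T\<rfloor> \<and> x \<le> Suc n} = {nat \<lfloor>real (Suc n) * c t / T\<rfloor>}"
      using fl[of n t] by auto
    have "f n (\<omega>,t) = (\<Sum>k\<in>{x. x = nat \<lfloor>real (Suc n) * c t / T\<rfloor> \<and> x \<le> Suc n}. B (T * real k / real (Suc n)) \<omega>)"
      unfolding f_def by (simp add: sum.If_cases[OF finite_atMost] Int_def)
    also have "\<dots> = (\<Sum>k\<in>{nat \<lfloor>real (Suc n) * c t / T\<rfloor>}. B (T * real k / real (Suc n)) \<omega>)"
      by (simp only: se)
    finally show ?thesis by (simp add: q_def)
  qed
  have fm: "f n \<in> borel_measurable (M \<Otimes>\<^sub>M lborel)" for n
  proof -
    have [measurable]: "B (T * real k / real (Suc n)) \<in> borel_measurable M" if "k \<le> Suc n" for k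
    proof (rule Bm)
      have "T * real k / real (Suc n) \<le> T * real (Suc n) / real (Suc n)"
        using that T by (intro divide_right_mono mult_left_mono) auto
      then show "T * real k / real (Suc n) \<in> {0..T}" using T by auto
    qed
    have [measurable]: "c \<in> borel_measurable borel" unfolding c_def by measurable
    show ?thesis unfolding f_def
      by measurable
  qed
  have qin: "q n t \<in> {0..T}" for n t
  proof -
    have "real (nat \<lfloor>real (Suc n) * c t / T\<rfloor>) \<le> real (Suc n)" using fl[of n t] by linarith
    then have "T * real (nat \<lfloor>real (Suc n) * c t / T\<rfloor>) \<le> T * real (Suc n)" using T by simp
    then show ?thesis using T by (simp add: q_def divide_le_eq)
  qed
  have qlim: "(\<lambda>n. q n t) \<longlonglongrightarrow> c t" for t
  proof -
    have b: "\<bar>q n t - c t\<bar> \<le> T / real (Suc n)" for n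
    proof -
      let ?x = "real (Suc n) * c t / T"
      have x0: "0 \<le> ?x" using cT T by simp
      have "real (nat \<lfloor>?x\<rfloor>) = of_int \<lfloor>?x\<rfloor>" using x0 by simp
      then have l1: "?x - 1 \<le> real (nat \<lfloor>?x\<rfloor>)" and l2: "real (nat \<lfloor>?x\<rfloor>) \<le> ?x"
        by linarith+
      have "T * (?x - 1) / real (Suc n) \<le> q n t" unfolding q_def
        by (rule divide_right_mono[OF mult_left_mono[OF l1]]) (use T in auto)
      moreover have "q n t \<le> T * ?x / real (Suc n)" unfolding q_def
        by (rule divide_right_mono[OF mult_left_mono[OF l2]]) (use T in auto)
      moreover have "T * ?x / real (Suc n) = c t" using T by simp
      moreover have "T * (?x - 1) / real (Suc n) = c t - T / real (Suc n)"
        using T by (simp add: right_diff_distrib diff_divide_distrib)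
      ultimately show ?thesis by (simp add: abs_le_iff)
    qed
    have "(\<lambda>n. T / real (Suc n)) \<longlonglongrightarrow> 0"
      using LIMSEQ_Suc[OF lim_const_over_n[of T]] by simp
    then have "(\<lambda>n. q n t - c t) \<longlonglongrightarrow> 0"
      by (rule Lim_null_comparison[rotated]) (use b in simp)
    then show ?thesis by (simp add: LIM_zero_iff)
  qed
  show ?thesis
  proof (rule borel_measurable_LIMSEQ_metric[OF fm])
    fix x :: "'a \<times> real" assume "x \<in> space (M \<Otimes>\<^sub>M lborel)"
    then obtain \<omega> t where x: "x = (\<omega>, t)" "\<omega> \<in> space M" by (auto simp: space_pair_measure)
    have "(\<lambda>n. B (q n t) \<omega>) \<longlonglongrightarrow> B (c t) \<omega>"
      using continuous_on_tendsto_compose[OF Bc[OF x(2)] qlim[of t]] cT[of t] qin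
      by (auto simp: o_def)
    then show "(\<lambda>n. f n x) \<longlonglongrightarrow> (case x of (\<omega>, t) \<Rightarrow> B (max 0 (min T t)) \<omega>)"
      by (simp add: x feq c_def)
  qed
qed
lemma self_int_meas:
  fixes M :: "'a measure" and B :: "real \<Rightarrow> 'a \<Rightarrow> real"
  assumes T: "0 < T" and BM: "brownian_motion_on M T B"
  shows "(\<lambda>\<omega>. self_int_eps a b T B \<epsilon> \<omega>) \<in> borel_measurable M"
proof -
  define BB where "BB x = B (max 0 (min T (snd x))) (fst x)" for x :: "'a \<times> real"
  have BBm[measurable]: "BB \<in> borel_measurable (M \<Otimes>\<^sub>M lborel)"
    using joint_meas[OF T BM] unfolding BB_def by (simp add: case_prod_beta')
  have BTm[measurable]: "B T \<in> borel_measurable M"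
    using BM T unfolding brownian_motion_on_def by auto
  define XX where "XX \<omega> t = a * (1 - t / T) + b * (t / T) + BB (\<omega>, t) - (t / T) * B T \<omega>" for \<omega> t
  define g where "g \<omega> t s = heat_kernel \<epsilon> (XX \<omega> t - XX \<omega> s)" for \<omega> t s
  have eq: "self_int_eps a b T B \<epsilon> \<omega> =
     (\<integral>t. (if 0 \<le> t \<and> t \<le> T then (\<integral>s. (if 0 \<le> s \<and> s \<le> t then g \<omega> t s else 0) \<partial>lborel) else 0) \<partial>lborel)" for \<omega>
    unfolding self_int_eps_def set_lebesgue_integral_def
  proof (intro Bochner_Integration.integral_cong refl)
    fix t :: real
    show "indicator {0..T} t *\<^sub>R (\<integral>s. indicator {0..t} s *\<^sub>R heat_kernel \<epsilon> (brownian_bridge a b T B t \<omega> - brownian_bridge a b T B s \<omega>) \<partial>lborel)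
      = (if 0 \<le> t \<and> t \<le> T then (\<integral>s. (if 0 \<le> s \<and> s \<le> t then g \<omega> t s else 0) \<partial>lborel) else 0)"
    proof (cases "0 \<le> t \<and> t \<le> T")
      case True
      have "(\<integral>s. indicator {0..t} s *\<^sub>R heat_kernel \<epsilon> (brownian_bridge a b T B t \<omega> - brownian_bridge a b T B s \<omega>) \<partial>lborel)
        = (\<integral>s. (if 0 \<le> s \<and> s \<le> t then g \<omega> t s else 0) \<partial>lborel)"
        using True by (intro Bochner_Integration.integral_cong refl)
          (auto simp: indicator_def g_def XX_def BB_def brownian_bridge_def)
      then show ?thesis using True by simp
    qed auto
  qed
  have BBm'[measurable]: "BB \<in> borel_measurable (M \<Otimes>\<^sub>M borel)"
    using BBm by (simp add: measurable_cong_sets[OF sets_pair_measure_cong[OF refl sets_lborel] refl])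
  have XXm[measurable]: "(\<lambda>x. XX (fst x) (snd x)) \<in> borel_measurable (M \<Otimes>\<^sub>M borel)"
    unfolding XX_def by measurable
  let ?f = "\<lambda>x s. (if 0 \<le> s \<and> s \<le> snd x then heat_kernel \<epsilon> (XX (fst x) (snd x) - XX (fst x) s) else 0)"
  have X1[measurable]: "(\<lambda>x. XX (fst (fst x)) (snd (fst x))) \<in> borel_measurable ((M \<Otimes>\<^sub>M borel) \<Otimes>\<^sub>M borel)"
    by (rule measurable_compose[OF measurable_fst XXm])
  have X2[measurable]: "(\<lambda>x. XX (fst (fst x)) (snd x)) \<in> borel_measurable ((M \<Otimes>\<^sub>M borel) \<Otimes>\<^sub>M borel)"
  proof -
    have "(\<lambda>x. (fst (fst x), snd x)) \<in> measurable ((M \<Otimes>\<^sub>M borel) \<Otimes>\<^sub>M borel) (M \<Otimes>\<^sub>M borel)"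
      by measurable
    from measurable_compose[OF this XXm] show ?thesis by simp
  qed
  have F: "case_prod ?f \<in> borel_measurable ((M \<Otimes>\<^sub>M borel) \<Otimes>\<^sub>M borel)"
    unfolding heat_kernel_def case_prod_beta' by measurable
  have F': "case_prod ?f \<in> borel_measurable ((M \<Otimes>\<^sub>M lborel) \<Otimes>\<^sub>M lborel)"
    using F by (simp add: measurable_cong_sets[OF sets_pair_measure_cong[OF sets_pair_measure_cong[OF refl sets_lborel] sets_lborel] refl])
  have G: "(\<lambda>x. \<integral>s. ?f x s \<partial>lborel) \<in> borel_measurable (M \<Otimes>\<^sub>M lborel)"
    by (rule lborel.borel_measurable_lebesgue_integral[OF F'])
  then have G': "(\<lambda>x. \<integral>s. ?f x s \<partial>lborel) \<in> borel_measurable (M \<Otimes>\<^sub>M borel)"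
    by (simp add: measurable_cong_sets[OF sets_pair_measure_cong[OF refl sets_lborel] refl])
  let ?h = "\<lambda>\<omega> t. if 0 \<le> t \<and> t \<le> T then (\<integral>s. ?f (\<omega>,t) s \<partial>lborel) else 0"
  have H: "case_prod ?h \<in> borel_measurable (M \<Otimes>\<^sub>M borel)"
    using G' unfolding case_prod_beta' by measurable
  have H': "case_prod ?h \<in> borel_measurable (M \<Otimes>\<^sub>M lborel)"
    using H by (simp add: measurable_cong_sets[OF sets_pair_measure_cong[OF refl sets_lborel] refl])
  have "(\<lambda>\<omega>. \<integral>t. ?h \<omega> t \<partial>lborel) \<in> borel_measurable M"
    by (rule lborel.borel_measurable_lebesgue_integral[OF H'])
  then show ?thesis
    unfolding eq g_def by (simp only: fst_conv snd_conv)
qed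

lemma heat_kernel_nonneg: "0 < \<epsilon> \<Longrightarrow> 0 \<le> heat_kernel \<epsilon> x"
  unfolding heat_kernel_def by simp

lemma self_int_nonneg:
  assumes "0 < \<epsilon>"
  shows "0 \<le> self_int_eps a b T B \<epsilon> \<omega>"
  unfolding self_int_eps_def set_lebesgue_integral_def
  by (intro integral_nonneg_AE AE_I2 scaleR_nonneg_nonneg)
     (auto intro!: integral_nonneg_AE AE_I2 scaleR_nonneg_nonneg heat_kernel_nonneg[OF assms])

theorem corollary3p2:
  fixes M :: "'a measure" and B :: "real \<Rightarrow> 'a \<Rightarrow> real"
    and T a b :: real and I :: "'a \<Rightarrow> real"
  assumes T_pos: "0 < T"
    and BM: "brownian_motion_on M T B"
    and I_meas: "I \<in> borel_measurable M"
    and I_lim: "((\<lambda>\<epsilon>. \<integral>\<^sup>+ \<omega>. ennreal ((self_int_eps a b T B \<epsilon> \<omega> - I \<omega>)\<^sup>2) \<partial>M)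
                  \<longlongrightarrow> 0) (at_right 0)"
  shows "\<forall>(z::complex) (p::real). Re z \<le> 0 \<and> 1 \<le> p \<longrightarrow>
           ((\<lambda>\<epsilon>. \<integral>\<^sup>+ \<omega>. ennreal (norm (exp (z * complex_of_real (self_int_eps a b T B \<epsilon> \<omega>))
                                       - exp (z * complex_of_real (I \<omega>))) powr p) \<partial>M)
             \<longlongrightarrow> 0) (at_right 0)"
proof (intro allI impI, elim conjE)
  fix z :: complex and p :: real
  assume z: "Re z \<le> 0" and p: "1 \<le> p"
  interpret prob_space M using BM unfolding brownian_motion_on_def by auto
  define S where "S \<epsilon> \<omega> = self_int_eps a b T B \<epsilon> \<omega>" for \<epsilon> \<omega>
  have Sm[measurable]: "S \<epsilon> \<in> borel_measurable M" for \<epsilon>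
    unfolding S_def using self_int_meas[OF T_pos BM] .
  note [measurable] = I_meas
  define G where "G \<epsilon> = (\<integral>\<^sup>+ \<omega>. ennreal ((S \<epsilon> \<omega> - I \<omega>)\<^sup>2) \<partial>M)" for \<epsilon>
  have Glim: "(G \<longlongrightarrow> 0) (at_right 0)" using I_lim unfolding G_def S_def .
  have evpos: "\<forall>\<^sub>F \<epsilon> in at_right (0::real). 0 < \<epsilon>"
    by (simp add: eventually_at_right_less)
  define L where "L = (\<integral>\<^sup>+ \<omega>. ennreal ((min (I \<omega>) 0)\<^sup>2) \<partial>M)"
  have "\<forall>\<^sub>F \<epsilon> in at_right (0::real). L \<le> G \<epsilon>"
    using evpos
  proof eventually_elim
    case (elim \<epsilon>)
    show ?case unfolding L_def G_def
    proof (intro nn_integral_mono ennreal_leI)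
      fix \<omega>
      have "0 \<le> S \<epsilon> \<omega>" unfolding S_def using self_int_nonneg[OF elim] .
      note S0 = this
      show "(min (I \<omega>) 0)\<^sup>2 \<le> (S \<epsilon> \<omega> - I \<omega>)\<^sup>2"
      proof (cases "I \<omega> \<le> 0")
        case True
        have "0 \<le> S \<epsilon> \<omega> * (S \<epsilon> \<omega> - 2 * I \<omega>)" using S0 True by (intro mult_nonneg_nonneg) auto
        then show ?thesis using True by (simp add: min_def power2_eq_square algebra_simps)
      qed (simp add: min_def)
    qed
  qed
  then have "L \<le> 0"
    by (intro tendsto_le[OF trivial_limit_at_right_real Glim tendsto_const])
  then have "L = 0" by simp
  then have "AE \<omega> in M. ennreal ((min (I \<omega>) 0)\<^sup>2) = 0"
    unfolding L_def by (subst (asm) nn_integral_0_iff_AE) auto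
  then have Ipos: "AE \<omega> in M. 0 \<le> I \<omega>"
    by eventually_elim (auto simp: min_def split: if_splits)
  define c where "c = norm z"
  define K :: real where "K = 2 powr (p - 1)"
  have K: "0 < K" unfolding K_def by simp
  define F where "F \<epsilon> = (\<integral>\<^sup>+ \<omega>. ennreal (norm (exp (z * complex_of_real (S \<epsilon> \<omega>))
                                       - exp (z * complex_of_real (I \<omega>))) powr p) \<partial>M)" for \<epsilon>
  have Fbound: "F \<epsilon> \<le> ennreal (K * \<delta>) + ennreal (K * c\<^sup>2 / \<delta>) * G \<epsilon>" if e: "0 < \<epsilon>" and d: "0 < \<delta>" for \<epsilon> \<delta>
  proof -
    have "F \<epsilon> \<le> (\<integral>\<^sup>+ \<omega>. ennreal (K * \<delta>) + ennreal (K * c\<^sup>2 / \<delta>) * ennreal ((S \<epsilon> \<omega> - I \<omega>)\<^sup>2) \<partial>M)"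
      unfolding F_def
    proof (intro nn_integral_mono_AE)
      show "AE \<omega> in M. ennreal (norm (exp (z * complex_of_real (S \<epsilon> \<omega>)) - exp (z * complex_of_real (I \<omega>))) powr p)
          \<le> ennreal (K * \<delta>) + ennreal (K * c\<^sup>2 / \<delta>) * ennreal ((S \<epsilon> \<omega> - I \<omega>)\<^sup>2)"
        using Ipos
      proof eventually_elim
        case (elim \<omega>)
        have S0: "0 \<le> S \<epsilon> \<omega>" unfolding S_def using self_int_nonneg[OF e] .
        let ?N = "norm (exp (z * complex_of_real (S \<epsilon> \<omega>)) - exp (z * complex_of_real (I \<omega>)))"
        have N2: "?N \<le> 2"
          using norm_triangle_ineq4[of "exp (z * complex_of_real (S \<epsilon> \<omega>))" "exp (z * complex_of_real (I \<omega>))"]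
            exp_norm_le1[OF z S0] exp_norm_le1[OF z elim] by linarith
        have Nc: "?N \<le> c * \<bar>S \<epsilon> \<omega> - I \<omega>\<bar>"
          unfolding c_def by (rule exp_diff_bound[OF z S0 elim])
        have "?N powr p \<le> 2 powr (p - 1) * (\<delta> + c^2 / \<delta> * \<bar>S \<epsilon> \<omega> - I \<omega>\<bar>^2)"
          by (rule key_bound) (use N2 Nc p d in \<open>auto simp: c_def\<close>)
        also have "\<dots> = K * \<delta> + K * c\<^sup>2 / \<delta> * (S \<epsilon> \<omega> - I \<omega>)\<^sup>2"
          by (simp add: K_def algebra_simps)
        finally have "ennreal (?N powr p) \<le> ennreal (K * \<delta> + K * c\<^sup>2 / \<delta> * (S \<epsilon> \<omega> - I \<omega>)\<^sup>2)"
          by (rule ennreal_leI)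
        also have "\<dots> = ennreal (K * \<delta>) + ennreal (K * c\<^sup>2 / \<delta> * (S \<epsilon> \<omega> - I \<omega>)\<^sup>2)"
          by (rule ennreal_plus) (use K d in auto)
        also have "ennreal (K * c\<^sup>2 / \<delta> * (S \<epsilon> \<omega> - I \<omega>)\<^sup>2) = ennreal (K * c\<^sup>2 / \<delta>) * ennreal ((S \<epsilon> \<omega> - I \<omega>)\<^sup>2)"
          by (rule ennreal_mult) (use K d in auto)
        finally show ?case .
      qed
    qed
    also have "\<dots> = ennreal (K * \<delta>) + ennreal (K * c\<^sup>2 / \<delta>) * G \<epsilon>"
      unfolding G_def
      by (subst nn_integral_add) (auto simp: nn_integral_cmult emeasure_space_1)
    finally show ?thesis .
  qed
  show "(F \<longlongrightarrow> 0) (at_right 0)"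
  proof (rule order_tendstoI)
    fix y :: ennreal assume "y < 0" then show "\<forall>\<^sub>F \<epsilon> in at_right 0. y < F \<epsilon>" by simp
  next
    fix e :: ennreal assume "0 < e"
    then obtain y where y: "0 < y" "y < e" using dense by blast
    then have "y < \<infinity>" using top.not_eq_extremum by fastforce
    then obtain r where r: "y = ennreal r" "0 \<le> r" by (cases y) auto
    with y have r0: "0 < r" by simp
    define \<delta> where "\<delta> = r / (2 * K)"
    have d: "0 < \<delta>" using r0 K by (simp add: \<delta>_def)
    define \<eta> where "\<eta> = \<delta> * r / (2 * (K * c\<^sup>2 + 1))"
    have cK: "0 \<le> K * c\<^sup>2" using K by simp
    have eta: "0 < \<eta>" using d r0 cK by (simp add: \<eta>_def)
    have "\<forall>\<^sub>F \<epsilon> in at_right 0. G \<epsilon> < ennreal \<eta>"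
      using order_tendstoD(2)[OF Glim] eta by simp
    then show "\<forall>\<^sub>F \<epsilon> in at_right 0. F \<epsilon> < e"
      using evpos
    proof eventually_elim
      case (elim \<epsilon>)
      have "F \<epsilon> \<le> ennreal (K * \<delta>) + ennreal (K * c\<^sup>2 / \<delta>) * G \<epsilon>"
        by (rule Fbound[OF elim(2) d])
      also have "\<dots> \<le> ennreal (K * \<delta>) + ennreal (K * c\<^sup>2 / \<delta>) * ennreal \<eta>"
        using elim(1) by (intro add_left_mono mult_left_mono) auto
      also have "ennreal (K * c\<^sup>2 / \<delta>) * ennreal \<eta> = ennreal (K * c\<^sup>2 / \<delta> * \<eta>)"
        by (rule ennreal_mult[symmetric]) (use K d eta in auto)
      also have "ennreal (K * \<delta>) + ennreal (K * c\<^sup>2 / \<delta> * \<eta>) = ennreal (K * \<delta> + K * c\<^sup>2 / \<delta> * \<eta>)"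
        by (rule ennreal_plus[symmetric]) (use K d eta in auto)
      finally have Fle: "F \<epsilon> \<le> ennreal (K * \<delta> + K * c\<^sup>2 / \<delta> * \<eta>)" .
      have eqr: "K * \<delta> + K * c\<^sup>2 / \<delta> * \<eta> = r / 2 + r * (K * c\<^sup>2) / (2 * (K * c\<^sup>2 + 1))"
      proof -
        have 1: "K * \<delta> = r / 2" using K by (simp add: \<delta>_def)
        have 2: "K * c\<^sup>2 / \<delta> * \<eta> = r * (K * c\<^sup>2) / (2 * (K * c\<^sup>2 + 1))"
          using d unfolding \<eta>_def by (simp add: field_simps)
        show ?thesis using 1 2 by simp
      qed
      have ltr: "r / 2 + r * (K * c\<^sup>2) / (2 * (K * c\<^sup>2 + 1)) < r"
      proof -
        have pos: "0 < 2 * (K * c\<^sup>2 + 1)" using cK by simp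
        have "r * (K * c\<^sup>2) < r / 2 * (2 * (K * c\<^sup>2 + 1))" using r0 by (simp add: algebra_simps)
        then have "r * (K * c\<^sup>2) / (2 * (K * c\<^sup>2 + 1)) < r / 2"
          using pos by (simp add: pos_divide_less_eq)
        then show ?thesis by linarith
      qed
      have "ennreal (K * \<delta> + K * c\<^sup>2 / \<delta> * \<eta>) < ennreal r" using eqr ltr r0 by (simp add: ennreal_lessI)
      then have "F \<epsilon> < ennreal r" using Fle by (meson order.strict_trans1)
      then show ?case using y r by simp
    qed
  qed
qed

end
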